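(* Let $\mathbf{y}\in\mathbb{R}^{2s}$ be an arbitrary $s$-sparse vector. Then for all $\mathbf{x}\in\mathbb{R}^{2s}$, \[ \|\mathbf{x}^s-\mathbf{y}\|_2\le\sqrt3\,\|\mathbf{x}-\mathbf{y}\|_2 . \]
   Context: $\mathbf{x}^s$ denotes $\mathbf{x}$ with all but its $s$ largest-magnitude entries set to zero; a vector is $s$-sparse if it has at most $s$ nonzero entries. *)

theory Defs
  imports Complex_Main
begin

text \<open>Vectors in R^n are modelled as functions nat => real, only indices below n matter.\<close>

definition l2norm :: "nat \<Rightarrow> (nat \<Rightarrow> real) \<Rightarrow> real" where
  "l2norm n x = sqrt (\<Sum>i<n. (x i)^2)"

definition is_sparse :: "nat \<Rightarrow> nat \<Rightarrow> (nat \<Rightarrow> real) \<Rightarrow> bool" where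
  "is_sparse n s y \<longleftrightarrow> card {i. i < n \<and> y i \<noteq> 0} \<le> s"

definition is_top_set :: "nat \<Rightarrow> nat \<Rightarrow> (nat \<Rightarrow> real) \<Rightarrow> nat set \<Rightarrow> bool" where
  "is_top_set n s x S \<longleftrightarrow> S \<subseteq> {..<n} \<and> card S = s \<and>
     (\<forall>i\<in>S. \<forall>j\<in>{..<n} - S. \<bar>x j\<bar> \<le> \<bar>x i\<bar>)"

definition keep :: "nat set \<Rightarrow> (nat \<Rightarrow> real) \<Rightarrow> nat \<Rightarrow> real" where
  "keep S x = (\<lambda>i. if i \<in> S then x i else 0)"

end

theory Submission
  imports Defs
begin

lemma key_sum:
  fixes f :: "nat \<Rightarrow> real"
  assumes "finite A" "finite B" "card A \<le> card B" "\<forall>a\<in>A. \<forall>b\<in>B. f a \<le> f b"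
    "\<forall>a\<in>A. 0 \<le> f a" "\<forall>b\<in>B. 0 \<le> f b"
  shows "sum f A \<le> sum f B"
proof (cases "A = {}")
  case True then show ?thesis using assms by (simp add: sum_nonneg)
next
  case False
  define c where "c = Max (f ` A)"
  have c: "\<forall>a\<in>A. f a \<le> c" using assms False by (simp add: c_def)
  have cin: "c \<in> f ` A" using assms False unfolding c_def by (intro Max_in) auto
  then have cB: "\<forall>b\<in>B. c \<le> f b" using assms by auto
  have c0: "0 \<le> c" using cin assms by auto
  have "sum f A \<le> of_nat (card A) * c" using sum_bounded_above[of A f c] c by auto
  also have "\<dots> \<le> of_nat (card B) * c" using assms(3) c0 by (simp add: mult_right_mono)
  also have "\<dots> \<le> sum f B" using sum_bounded_below[of B c f] cB by auto
  finally show ?thesis .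
qed

theorem proposition5:
  fixes s :: nat and x y :: "nat \<Rightarrow> real" and S :: "nat set"
  assumes "is_sparse (2 * s) s y"
    and "is_top_set (2 * s) s x S"
  shows "l2norm (2 * s) (\<lambda>i. keep S x i - y i) \<le> sqrt 3 * l2norm (2 * s) (\<lambda>i. x i - y i)"
proof -
  define n where "n = 2 * s"
  define N where "N = {..<n}"
  define T where "T = {i. i < n \<and> y i \<noteq> 0}"
  have SN: "S \<subseteq> N" and cS: "card S = s"
    and top: "\<forall>i\<in>S. \<forall>j\<in>N - S. \<bar>x j\<bar> \<le> \<bar>x i\<bar>"
    using assms(2) unfolding is_top_set_def N_def n_def by auto
  have cT: "card T \<le> s" using assms(1) unfolding is_sparse_def T_def n_def by auto
  have finN: "finite N" unfolding N_def by auto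
  have finS: "finite S" using SN finN finite_subset by blast
  have TN: "T \<subseteq> N" unfolding T_def N_def by auto
  have finT: "finite T" using TN finN finite_subset by blast
  define D where "D = (\<lambda>i. (x i - y i)^2)"
  have e1: "(\<Sum>i\<in>N. (keep S x i - y i)^2) = (\<Sum>i\<in>S. D i) + (\<Sum>i\<in>N-S. (y i)^2)"
  proof -
    have "(\<Sum>i\<in>N. (keep S x i - y i)^2) = (\<Sum>i\<in>N-S. (keep S x i - y i)^2) + (\<Sum>i\<in>S. (keep S x i - y i)^2)"
      using sum.subset_diff[OF SN finN] by simp
    also have "(\<Sum>i\<in>N-S. (keep S x i - y i)^2) = (\<Sum>i\<in>N-S. (y i)^2)"
      by (rule sum.cong) (auto simp: keep_def)
    also have "(\<Sum>i\<in>S. (keep S x i - y i)^2) = (\<Sum>i\<in>S. D i)"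
      by (rule sum.cong) (auto simp: keep_def D_def)
    finally show ?thesis by simp
  qed
  have e2: "(\<Sum>i\<in>N. D i) = (\<Sum>i\<in>S. D i) + (\<Sum>i\<in>N-S. D i)"
    using sum.subset_diff[OF SN finN, of D] by simp
  have y1: "(\<Sum>i\<in>N-S. (y i)^2) = (\<Sum>i\<in>T-S. (y i)^2)"
    by (rule sum.mono_neutral_right) (use finN TN in \<open>auto simp: T_def N_def\<close>)
  have y2: "(\<Sum>i\<in>T-S. (y i)^2) \<le> (\<Sum>i\<in>T-S. 2 * D i + 2 * (x i)^2)"
  proof (rule sum_mono)
    fix i
    have "(y i)^2 \<le> 2 * (x i - y i)^2 + 2 * (x i)^2"
      using sum_squares_ge_zero[of "2 * x i - y i" 0] by (simp add: power2_eq_square algebra_simps)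
    then show "(y i)^2 \<le> 2 * D i + 2 * (x i)^2" by (simp add: D_def)
  qed
  have y3: "(\<Sum>i\<in>T-S. D i) \<le> (\<Sum>i\<in>N-S. D i)"
    by (rule sum_mono2) (use finN TN in \<open>auto simp: D_def\<close>)
  have cards: "card (T - S) \<le> card (S - T)"
  proof -
    have "card (T - S) = card T - card (T \<inter> S)" using finT by (simp add: card_Diff_subset_Int)
    moreover have "card (S - T) = card S - card (S \<inter> T)" using finS by (simp add: card_Diff_subset_Int)
    moreover have "card (T \<inter> S) \<le> card T" using finT by (simp add: card_mono)
    ultimately show ?thesis using cT cS by (simp add: Int_commute)
  qed
  have y4: "(\<Sum>i\<in>T-S. (x i)^2) \<le> (\<Sum>i\<in>S-T. (x i)^2)"
  proof (rule key_sum)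
    show "\<forall>a\<in>T - S. \<forall>b\<in>S - T. (x a)\<^sup>2 \<le> (x b)\<^sup>2"
    proof (intro ballI)
      fix a b assume a: "a \<in> T - S" and b: "b \<in> S - T"
      then have "\<bar>x a\<bar> \<le> \<bar>x b\<bar>" using top TN by auto
      then show "(x a)\<^sup>2 \<le> (x b)\<^sup>2" by (simp add: abs_le_square_iff)
    qed
  qed (use finT finS cards in auto)
  have y5: "(\<Sum>i\<in>S-T. (x i)^2) = (\<Sum>i\<in>S-T. D i)"
    by (rule sum.cong) (use SN in \<open>auto simp: D_def T_def N_def\<close>)
  have y6: "(\<Sum>i\<in>S-T. D i) \<le> (\<Sum>i\<in>S. D i)"
    by (rule sum_mono2) (use finS in \<open>auto simp: D_def\<close>)
  have sp: "(\<Sum>i\<in>T-S. 2 * D i + 2 * (x i)^2) = 2 * (\<Sum>i\<in>T-S. D i) + 2 * (\<Sum>i\<in>T-S. (x i)^2)"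
    by (simp add: sum.distrib sum_distrib_left)
  have nn1: "0 \<le> (\<Sum>i\<in>S. D i)" and nn2: "0 \<le> (\<Sum>i\<in>N-S. D i)"
    by (auto intro: sum_nonneg simp: D_def)
  have main: "(\<Sum>i\<in>N. (keep S x i - y i)^2) \<le> 3 * (\<Sum>i\<in>N. D i)"
    using e1 e2 y1 y2 y3 y4 y5 y6 sp nn1 nn2 by linarith
  have "l2norm (2 * s) (\<lambda>i. keep S x i - y i) = sqrt (\<Sum>i\<in>N. (keep S x i - y i)^2)"
    by (simp add: l2norm_def N_def n_def)
  also have "\<dots> \<le> sqrt (3 * (\<Sum>i\<in>N. D i))" using main by simp
  also have "\<dots> = sqrt 3 * l2norm (2 * s) (\<lambda>i. x i - y i)"
    by (simp add: l2norm_def N_def n_def D_def real_sqrt_mult)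
  finally show ?thesis .
qed

end
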